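(* Let $(X,\|\cdot\|_X)$ be a Banach space and $\mathcal{K}\subset X$ compact. For every $n\ge1$ and every $\gamma>0$, $$d_n^{\gamma^2\mathrm{diam}(\mathcal{K})}(\mathcal{K})_X\le\delta^*_{n,\gamma}(\mathcal{K})_X.$$
   Context: $\mathrm{diam}(\mathcal{K})=\sup_{f,g\in\mathcal{K}}\|f-g\|_X$. The stable manifold width is $\delta^*_{n,\gamma}(\mathcal{K})_X=\inf_{a,M,\|\cdot\|_{Y_n}}\sup_{f\in\mathcal{K}}\|f-M(a(f))\|_X$, the infimum over all norms $\|\cdot\|_{Y_n}$ on $\mathbb{R}^n$ and all maps $a:\mathcal{K}\to(\mathbb{R}^n,\|\cdot\|_{Y_n})$, $M:(\mathbb{R}^n,\|\cdot\|_{Y_n})\to X$ that are both $\gamma$-Lipschitz. For $k\ge1$ and a norm $\|\cdot\|_{Y_k}$ on $\mathbb{R}^k$ let $B_{Y_k}=\{y\in\mathbb{R}^k:\|y\|_{Y_k}\le1\}$; $d^\gamma(\mathcal{K},Y_k)_X=\inf_{\Phi}\sup_{f\in\mathcal{K}}\inf_{y\in B_{Y_k}}\|f-\Phi(y)\|_X$, the infimum over all maps $\Phi:B_{Y_k}\to X$ with $\|\Phi(y)-\Phi(y')\|_X\le\gamma\|y-y'\|_{Y_k}$; and the Lipschitz width is $d_n^\gamma(\mathcal{K})_X=\inf_{1\le k\le n}\inf_{\|\cdot\|_{Y_k}}d^\gamma(\mathcal{K},Y_k)_X$, the inner infimum over all norms on $\mathbb{R}^k$. *)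

theory Defs
  imports "HOL-Analysis.Analysis"
begin

text \<open>R^k is represented by the coordinate space of functions nat => real vanishing
  from index k on.\<close>
definition coord_space :: "nat \<Rightarrow> (nat \<Rightarrow> real) set" where
  "coord_space k = {y. \<forall>i\<ge>k. y i = 0}"

definition vsub :: "(nat \<Rightarrow> real) \<Rightarrow> (nat \<Rightarrow> real) \<Rightarrow> (nat \<Rightarrow> real)" where
  "vsub x y = (\<lambda>i. x i - y i)"

definition is_norm_on :: "nat \<Rightarrow> ((nat \<Rightarrow> real) \<Rightarrow> real) \<Rightarrow> bool" where
  "is_norm_on k N \<longleftrightarrow>
     (\<forall>x\<in>coord_space k. N x \<ge> 0 \<and> (N x = 0 \<longleftrightarrow> x = (\<lambda>i. 0))) \<and>
     (\<forall>x\<in>coord_space k. \<forall>c. N (\<lambda>i. c * x i) = \<bar>c\<bar> * N x) \<and>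
     (\<forall>x\<in>coord_space k. \<forall>y\<in>coord_space k. N (\<lambda>i. x i + y i) \<le> N x + N y)"

definition stable_manifold_width ::
    "real \<Rightarrow> nat \<Rightarrow> 'a::real_normed_vector set \<Rightarrow> real" where
  "stable_manifold_width \<gamma> n K =
     Inf {Sup {norm (f - M (a f)) | f. f \<in> K} | N a M.
            is_norm_on n N \<and>
            (\<forall>f\<in>K. a f \<in> coord_space n) \<and>
            (\<forall>f\<in>K. \<forall>g\<in>K. N (vsub (a f) (a g)) \<le> \<gamma> * norm (f - g)) \<and>
            (\<forall>y\<in>coord_space n. \<forall>y'\<in>coord_space n.
                norm (M y - M y') \<le> \<gamma> * N (vsub y y'))}"

definition unit_ball_norm :: "nat \<Rightarrow> ((nat \<Rightarrow> real) \<Rightarrow> real) \<Rightarrow> (nat \<Rightarrow> real) set" where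
  "unit_ball_norm k N = {y \<in> coord_space k. N y \<le> 1}"

definition lipschitz_width_fixed ::
    "real \<Rightarrow> nat \<Rightarrow> ((nat \<Rightarrow> real) \<Rightarrow> real) \<Rightarrow> 'a::real_normed_vector set \<Rightarrow> real" where
  "lipschitz_width_fixed \<gamma> k N K =
     Inf {Sup {Inf {norm (f - \<Phi> y) | y. y \<in> unit_ball_norm k N} | f. f \<in> K} | \<Phi>.
            \<forall>y\<in>unit_ball_norm k N. \<forall>y'\<in>unit_ball_norm k N.
               norm (\<Phi> y - \<Phi> y') \<le> \<gamma> * N (vsub y y')}"

definition lipschitz_width ::
    "real \<Rightarrow> nat \<Rightarrow> 'a::real_normed_vector set \<Rightarrow> real" where
  "lipschitz_width \<gamma> n K =
     Inf {lipschitz_width_fixed \<gamma> k N K | k N. 1 \<le> k \<and> k \<le> n \<and> is_norm_on k N}"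

end

theory Submission
  imports Defs
begin

lemma sumnorm: "is_norm_on n (\<lambda>x. \<Sum>i<n. \<bar>x i\<bar>)"
proof -
  have A: "x = (\<lambda>i. 0)" if "x \<in> coord_space n" "(\<Sum>i<n. \<bar>x i\<bar>) = 0" for x :: "nat \<Rightarrow> real"
  proof
    fix i show "x i = 0"
    proof (cases "i < n")
      case True then show ?thesis using that(2) by (simp add: sum_nonneg_eq_0_iff)
    next
      case False then show ?thesis using that(1) by (simp add: coord_space_def)
    qed
  qed
  have B: "(\<Sum>i<n. \<bar>x i + y i\<bar>) \<le> (\<Sum>i<n. \<bar>x i\<bar>) + (\<Sum>i<n. \<bar>y i\<bar>)" for x y :: "nat \<Rightarrow> real"
    by (simp add: sum.distrib[symmetric] abs_triangle_ineq sum_mono)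
  have C: "(\<Sum>i<n. \<bar>c * x i\<bar>) = \<bar>c\<bar> * (\<Sum>i<n. \<bar>x i\<bar>)" for c and x :: "nat \<Rightarrow> real"
    by (simp add: abs_mult sum_distrib_left)
  show ?thesis unfolding is_norm_on_def
    using A B C by (auto simp: sum_nonneg)
qed

lemma norm_zero: "is_norm_on k N \<Longrightarrow> N (\<lambda>i. 0) = 0"
  unfolding is_norm_on_def coord_space_def by auto

lemma norm_nonneg': "is_norm_on k N \<Longrightarrow> x \<in> coord_space k \<Longrightarrow> N x \<ge> 0"
  unfolding is_norm_on_def by auto

lemma vsub_coord: "x \<in> coord_space k \<Longrightarrow> y \<in> coord_space k \<Longrightarrow> vsub x y \<in> coord_space k"
  unfolding coord_space_def vsub_def by auto

lemma zero_ball: "is_norm_on k N \<Longrightarrow> (\<lambda>i. 0) \<in> unit_ball_norm k N"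
  using norm_zero[of k N] unfolding unit_ball_norm_def coord_space_def by auto

lemma inner_nonneg:
  assumes "is_norm_on k N"
  shows "0 \<le> Inf {norm (f - \<Phi> y) | y. y \<in> unit_ball_norm k N}"
  apply (rule cInf_greatest)
  using zero_ball[OF assms] by auto

lemma inner_le:
  assumes "z \<in> unit_ball_norm k N"
  shows "Inf {norm (f - \<Phi> y) | y. y \<in> unit_ball_norm k N} \<le> norm (f - \<Phi> z)"
  apply (rule cInf_lower)
  using assms by (auto intro!: bdd_belowI[where m=0])

lemma outer_ge:
  assumes "is_norm_on k N" "bounded K" "f \<in> K"
  shows "Inf {norm (f - \<Phi> y) | y. y \<in> unit_ball_norm k N}
     \<le> Sup {Inf {norm (f - \<Phi> y) | y. y \<in> unit_ball_norm k N} | f. f \<in> K}"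
proof (rule cSup_upper)
  show "Inf {norm (f - \<Phi> y) | y. y \<in> unit_ball_norm k N}
     \<in> {Inf {norm (f - \<Phi> y) | y. y \<in> unit_ball_norm k N} | f. f \<in> K}" using assms by auto
  obtain B where B: "\<forall>x\<in>K. norm x \<le> B" using assms(2) bounded_iff by blast
  show "bdd_above {Inf {norm (f - \<Phi> y) | y. y \<in> unit_ball_norm k N} | f. f \<in> K}"
  proof (rule bdd_aboveI[where M="B + norm (\<Phi> (\<lambda>i. 0))"], clarify)
    fix g assume g: "g \<in> K"
    have "Inf {norm (g - \<Phi> y) | y. y \<in> unit_ball_norm k N} \<le> norm (g - \<Phi> (\<lambda>i. 0))"
      by (rule inner_le[OF zero_ball[OF assms(1)]])
    also have "\<dots> \<le> norm g + norm (\<Phi> (\<lambda>i. 0))" by (rule norm_triangle_ineq4)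
    also have "\<dots> \<le> B + norm (\<Phi> (\<lambda>i. 0))" using B g by auto
    finally show "Inf {norm (g - \<Phi> y) | y. y \<in> unit_ball_norm k N} \<le> B + norm (\<Phi> (\<lambda>i. 0))" .
  qed
qed

lemma sup_nonneg:
  assumes "is_norm_on k N" "bounded K" "K \<noteq> {}"
  shows "0 \<le> Sup {Inf {norm (f - \<Phi> y) | y. y \<in> unit_ball_norm k N} | f. f \<in> K}"
proof -
  obtain f where "f \<in> K" using assms by auto
  then show ?thesis using outer_ge[OF assms(1,2), of f \<Phi>] inner_nonneg[OF assms(1), of f \<Phi>] by linarith
qed

lemma lwf_nonneg:
  assumes "is_norm_on k N" "bounded K" "K \<noteq> {}" "g \<ge> 0"
  shows "0 \<le> lipschitz_width_fixed g k N K"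
  unfolding lipschitz_width_fixed_def
proof (rule cInf_greatest)
  have "\<forall>y\<in>unit_ball_norm k N. \<forall>y'\<in>unit_ball_norm k N.
               norm ((\<lambda>_. 0::'a) y - (\<lambda>_. 0::'a) y') \<le> g * N (vsub y y')"
  proof (intro ballI)
    fix y y' assume "y \<in> unit_ball_norm k N" "y' \<in> unit_ball_norm k N"
    then have "vsub y y' \<in> coord_space k" using vsub_coord unfolding unit_ball_norm_def by blast
    then have "0 \<le> N (vsub y y')" using norm_nonneg'[OF assms(1)] by blast
    then show "norm ((\<lambda>_. 0::'a) y - (\<lambda>_. 0::'a) y') \<le> g * N (vsub y y')" using assms(4) by simp
  qed
  then show "{Sup {Inf {norm (f - \<Phi> y) | y. y \<in> unit_ball_norm k N} | f. f \<in> K} | \<Phi>.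
            \<forall>y\<in>unit_ball_norm k N. \<forall>y'\<in>unit_ball_norm k N.
               norm (\<Phi> y - \<Phi> y') \<le> g * N (vsub y y')} \<noteq> {}"
    apply -
    apply (rule ex_in_conv[THEN iffD1], rule exI, rule CollectI, rule exI[where x="\<lambda>_. 0"], rule conjI[OF refl])
    apply assumption
    done
next
  fix x assume "x \<in> {Sup {Inf {norm (f - \<Phi> y) | y. y \<in> unit_ball_norm k N} | f. f \<in> K} | \<Phi>.
            \<forall>y\<in>unit_ball_norm k N. \<forall>y'\<in>unit_ball_norm k N.
               norm (\<Phi> y - \<Phi> y') \<le> g * N (vsub y y')}"
  then obtain \<Phi> :: "(nat \<Rightarrow> real) \<Rightarrow> 'a" where "x = Sup {Inf {norm (f - \<Phi> y) | y. y \<in> unit_ball_norm k N} | f. f \<in> K}"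
    by (elim CollectE exE conjE) 
  then show "0 \<le> x" using sup_nonneg[OF assms(1-3)] by simp
qed

lemma Inf_const:
  fixes X :: "real set"
  assumes "X \<noteq> {}" "\<And>x. x \<in> X \<Longrightarrow> x = c"
  shows "Inf X = c"
proof -
  have "X = {c}" using assms by blast
  then show ?thesis by simp
qed

lemma const_adm:
  assumes "is_norm_on k N" "g \<ge> 0"
  shows "\<forall>y\<in>unit_ball_norm k N. \<forall>y'\<in>unit_ball_norm k N.
               norm ((\<lambda>_. 0::'a::real_normed_vector) y - (\<lambda>_. 0::'a) y') \<le> g * N (vsub y y')"
proof (intro ballI)
  fix y y' assume "y \<in> unit_ball_norm k N" "y' \<in> unit_ball_norm k N"
  then have "vsub y y' \<in> coord_space k" using vsub_coord unfolding unit_ball_norm_def by blast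
  then have "0 \<le> N (vsub y y')" using norm_nonneg'[OF assms(1)] by blast
  then show "norm ((\<lambda>_. 0::'a) y - (\<lambda>_. 0::'a) y') \<le> g * N (vsub y y')" using assms(2) by simp
qed

theorem theorem6p1:
  fixes K :: "'a::banach set" and n :: nat and \<gamma> :: real
  assumes "compact K" and "n \<ge> 1" and "\<gamma> > 0"
  shows "lipschitz_width (\<gamma>\<^sup>2 * diameter K) n K \<le> stable_manifold_width \<gamma> n K"
proof -
  define D where "D = diameter K"
  have bK: "bounded K" using assms(1) compact_imp_bounded by blast
  have D0: "0 \<le> D" using diameter_ge_0[OF bK] D_def by simp
  define g' where "g' = \<gamma>^2 * D"
  have g'0: "0 \<le> g'" using D0 by (simp add: g'_def)
  let ?S = "{Sup {norm (f - M (a f)) | f. f \<in> K} | N a M.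
            is_norm_on n N \<and>
            (\<forall>f\<in>K. a f \<in> coord_space n) \<and>
            (\<forall>f\<in>K. \<forall>g\<in>K. N (vsub (a f) (a g)) \<le> \<gamma> * norm (f - g)) \<and>
            (\<forall>y\<in>coord_space n. \<forall>y'\<in>coord_space n.
                norm (M y - M y') \<le> \<gamma> * N (vsub y y'))}"
  let ?N0 = "\<lambda>x::nat\<Rightarrow>real. \<Sum>i<n. \<bar>x i\<bar>"
  have w: "is_norm_on n ?N0 \<and>
            (\<forall>f\<in>K. (\<lambda>_. (\<lambda>i. 0::real)) f \<in> coord_space n) \<and>
            (\<forall>f\<in>K. \<forall>g\<in>K. ?N0 (vsub ((\<lambda>_. (\<lambda>i. 0::real)) f) ((\<lambda>_. (\<lambda>i. 0::real)) g)) \<le> \<gamma> * norm (f - g)) \<and>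
            (\<forall>y\<in>coord_space n. \<forall>y'\<in>coord_space n.
                norm ((\<lambda>_. 0::'a) y - (\<lambda>_. 0::'a) y') \<le> \<gamma> * ?N0 (vsub y y'))"
    using sumnorm[of n] assms(3) by (simp add: coord_space_def vsub_def sum_nonneg)
  have Sne: "?S \<noteq> {}"
    apply (rule ex_in_conv[THEN iffD1], rule exI, rule CollectI)
    apply (rule exI[where x="?N0"], rule exI[where x="\<lambda>_. (\<lambda>i. 0::real)"], rule exI[where x="\<lambda>_. 0::'a"])
    apply (rule conjI[OF refl])
    apply (rule w)
    done
  show ?thesis
  proof (cases "K = {}")
    case True
    let ?L = "{lipschitz_width_fixed g' k N K | k N. 1 \<le> k \<and> k \<le> n \<and> is_norm_on k N}"
    have "stable_manifold_width \<gamma> n K = Sup {}"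
      unfolding stable_manifold_width_def
      apply (rule Inf_const[OF Sne])
      using True by auto
    moreover have "lipschitz_width g' n K = Sup {}"
      unfolding lipschitz_width_def
    proof (rule Inf_const)
      show "?L \<noteq> {}"
        apply (rule ex_in_conv[THEN iffD1], rule exI, rule CollectI)
        apply (rule exI[where x=n], rule exI[where x="?N0"])
        apply (rule conjI[OF refl])
        using assms(2) sumnorm[of n] by simp
      fix x assume "x \<in> ?L"
      then obtain k N where x: "x = lipschitz_width_fixed g' k N K" and Nk: "is_norm_on k N"
        by (elim CollectE exE conjE) 
      let ?P = "{Sup {Inf {norm (f - \<Phi> y) | y. y \<in> unit_ball_norm k N} | f. f \<in> K} | \<Phi>.
            \<forall>y\<in>unit_ball_norm k N. \<forall>y'\<in>unit_ball_norm k N.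
               norm (\<Phi> y - \<Phi> y') \<le> g' * N (vsub y y')}"
      have "Inf ?P = Sup {}"
      proof (rule Inf_const)
        show "?P \<noteq> {}"
          apply (rule ex_in_conv[THEN iffD1], rule exI, rule CollectI, rule exI[where x="\<lambda>_. 0::'a"], rule conjI[OF refl])
          by (rule const_adm[OF Nk g'0])
        fix z assume "z \<in> ?P"
        then obtain \<Phi> :: "(nat \<Rightarrow> real) \<Rightarrow> 'a" where "z = Sup {Inf {norm (f - \<Phi> y) | y. y \<in> unit_ball_norm k N} | f. f \<in> K}"
          by (elim CollectE exE conjE) 
        then show "z = Sup {}" using True by simp
      qed
      then show "x = Sup {}" unfolding x lipschitz_width_fixed_def .
    qed
    ultimately show ?thesis unfolding g'_def D_def by simp
  next
    case False
    then obtain f0 where f0: "f0 \<in> K" by blast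
    have "lipschitz_width g' n K \<le> Inf ?S"
    proof (rule cInf_greatest[OF Sne])
      fix s assume "s \<in> ?S"
      then obtain N a M where s: "s = Sup {norm (f - M (a f)) | f. f \<in> K}"
        and Nn: "is_norm_on n N" and ac: "\<forall>f\<in>K. a f \<in> coord_space n"
        and aL: "\<forall>f\<in>K. \<forall>g\<in>K. N (vsub (a f) (a g)) \<le> \<gamma> * norm (f - g)"
        and MLip: "\<forall>y\<in>coord_space n. \<forall>y'\<in>coord_space n. norm (M y - M y') \<le> \<gamma> * N (vsub y y')"
        by (elim CollectE exE conjE) 
      define c where "c = \<gamma> * D"
      have c0: "0 \<le> c" using D0 assms(3) by (simp add: c_def)
      define \<Phi> where "\<Phi> = (\<lambda>y. M (\<lambda>i. a f0 i + c * y i))"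
      have uc: "(\<lambda>i. a f0 i + c * y i) \<in> coord_space n" if "y \<in> coord_space n" for y
        using that ac f0 unfolding coord_space_def by auto
      have \<Phi>L: "\<forall>y\<in>unit_ball_norm n N. \<forall>y'\<in>unit_ball_norm n N.
               norm (\<Phi> y - \<Phi> y') \<le> g' * N (vsub y y')"
      proof (intro ballI)
        fix y y' assume y: "y \<in> unit_ball_norm n N" and y': "y' \<in> unit_ball_norm n N"
        then have yc: "y \<in> coord_space n" "y' \<in> coord_space n" unfolding unit_ball_norm_def by auto
        have "norm (\<Phi> y - \<Phi> y') \<le> \<gamma> * N (vsub (\<lambda>i. a f0 i + c * y i) (\<lambda>i. a f0 i + c * y' i))"
          unfolding \<Phi>_def using MLip uc yc by blast
        also have "vsub (\<lambda>i. a f0 i + c * y i) (\<lambda>i. a f0 i + c * y' i) = (\<lambda>i. c * vsub y y' i)"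
          by (rule ext) (simp add: vsub_def algebra_simps)
        also have "N (\<lambda>i. c * vsub y y' i) = \<bar>c\<bar> * N (vsub y y')"
          using Nn vsub_coord[OF yc] unfolding is_norm_on_def by blast
        also have "\<gamma> * (\<bar>c\<bar> * N (vsub y y')) = g' * N (vsub y y')"
          using c0 by (simp add: c_def g'_def power2_eq_square)
        finally show "norm (\<Phi> y - \<Phi> y') \<le> g' * N (vsub y y')" .
      qed
      have step1: "lipschitz_width g' n K \<le> lipschitz_width_fixed g' n N K"
        unfolding lipschitz_width_def
      proof (rule cInf_lower)
        show "lipschitz_width_fixed g' n N K \<in> {lipschitz_width_fixed g' k N K | k N. 1 \<le> k \<and> k \<le> n \<and> is_norm_on k N}"
          apply (rule CollectI, rule exI[where x=n], rule exI[where x=N])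
          apply (rule conjI[OF refl])
          using assms(2) Nn by simp
        show "bdd_below {lipschitz_width_fixed g' k N K | k N. 1 \<le> k \<and> k \<le> n \<and> is_norm_on k N}"
        proof (rule bdd_belowI[where m=0])
          fix x assume "x \<in> {lipschitz_width_fixed g' k N K | k N. 1 \<le> k \<and> k \<le> n \<and> is_norm_on k N}"
          then obtain k N' where x: "x = lipschitz_width_fixed g' k N' K" and Nk: "is_norm_on k N'"
            by (elim CollectE exE conjE) 
          show "0 \<le> x" unfolding x by (rule lwf_nonneg[OF Nk bK False g'0])
        qed
      qed
      have step2: "lipschitz_width_fixed g' n N K
          \<le> Sup {Inf {norm (f - \<Phi> y) | y. y \<in> unit_ball_norm n N} | f. f \<in> K}"
        unfolding lipschitz_width_fixed_def
      proof (rule cInf_lower)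
        show "Sup {Inf {norm (f - \<Phi> y) | y. y \<in> unit_ball_norm n N} | f. f \<in> K}
          \<in> {Sup {Inf {norm (f - \<Phi> y) | y. y \<in> unit_ball_norm n N} | f. f \<in> K} | \<Phi>.
            \<forall>y\<in>unit_ball_norm n N. \<forall>y'\<in>unit_ball_norm n N.
               norm (\<Phi> y - \<Phi> y') \<le> g' * N (vsub y y')}"
          apply (rule CollectI, rule exI[where x=\<Phi>], rule conjI[OF refl])
          by (rule \<Phi>L)
        show "bdd_below {Sup {Inf {norm (f - \<Phi> y) | y. y \<in> unit_ball_norm n N} | f. f \<in> K} | \<Phi>.
            \<forall>y\<in>unit_ball_norm n N. \<forall>y'\<in>unit_ball_norm n N.
               norm (\<Phi> y - \<Phi> y') \<le> g' * N (vsub y y')}"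
        proof (rule bdd_belowI[where m=0])
          fix x assume "x \<in> {Sup {Inf {norm (f - \<Phi> y) | y. y \<in> unit_ball_norm n N} | f. f \<in> K} | \<Phi>.
            \<forall>y\<in>unit_ball_norm n N. \<forall>y'\<in>unit_ball_norm n N.
               norm (\<Phi> y - \<Phi> y') \<le> g' * N (vsub y y')}"
          then obtain \<Psi> :: "(nat \<Rightarrow> real) \<Rightarrow> 'a" where x: "x = Sup {Inf {norm (f - \<Psi> y) | y. y \<in> unit_ball_norm n N} | f. f \<in> K}"
            by (elim CollectE exE conjE) 
          show "0 \<le> x" unfolding x by (rule sup_nonneg[OF Nn bK False])
        qed
      qed
      obtain B where B: "\<forall>x\<in>K. norm x \<le> B" using bK bounded_iff by blast
      have MaLip: "norm (M (a f) - M (a f0)) \<le> \<gamma> * (\<gamma> * norm (f - f0))" if f: "f \<in> K" for f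
      proof -
        have "norm (M (a f) - M (a f0)) \<le> \<gamma> * N (vsub (a f) (a f0))" using MLip ac f f0 by blast
        also have "\<dots> \<le> \<gamma> * (\<gamma> * norm (f - f0))" using aL f f0 assms(3) by simp
        finally show ?thesis .
      qed
      have bdd: "bdd_above {norm (f - M (a f)) | f. f \<in> K}"
      proof (rule bdd_aboveI[where M="B + norm (M (a f0)) + \<gamma> * (\<gamma> * D)"])
        fix x assume "x \<in> {norm (f - M (a f)) | f. f \<in> K}"
        then obtain f where x: "x = norm (f - M (a f))" and f: "f \<in> K" by (elim CollectE exE conjE)
        have "norm (f - f0) \<le> D" using diameter_bounded_bound[OF bK f f0] by (simp add: D_def dist_norm)
        then have "\<gamma> * (\<gamma> * norm (f - f0)) \<le> \<gamma> * (\<gamma> * D)" using assms(3) by simp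
        moreover have "norm (f - M (a f)) \<le> norm f + norm (M (a f0)) + norm (M (a f) - M (a f0))"
        proof -
          have e: "f - M (a f) = (f - M (a f0)) - (M (a f) - M (a f0))" by simp
          have "norm (f - M (a f)) \<le> norm (f - M (a f0)) + norm (M (a f) - M (a f0))"
            unfolding e by (rule norm_triangle_ineq4)
          moreover have "norm (f - M (a f0)) \<le> norm f + norm (M (a f0))" by (rule norm_triangle_ineq4)
          ultimately show ?thesis by linarith
        qed
        ultimately show "x \<le> B + norm (M (a f0)) + \<gamma> * (\<gamma> * D)" using x B[rule_format, OF f] MaLip[OF f] by linarith
      qed
      have step3: "Sup {Inf {norm (f - \<Phi> y) | y. y \<in> unit_ball_norm n N} | f. f \<in> K} \<le> s"
        unfolding s
      proof (rule cSup_least)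
        show "{Inf {norm (f - \<Phi> y) | y. y \<in> unit_ball_norm n N} | f. f \<in> K} \<noteq> {}" using f0 by blast
        fix x assume "x \<in> {Inf {norm (f - \<Phi> y) | y. y \<in> unit_ball_norm n N} | f. f \<in> K}"
        then obtain f where x: "x = Inf {norm (f - \<Phi> y) | y. y \<in> unit_ball_norm n N}" and f: "f \<in> K"
          by (elim CollectE exE conjE)
        have nf: "norm (f - f0) \<le> D" using diameter_bounded_bound[OF bK f f0] by (simp add: D_def dist_norm)
        obtain y where yb: "y \<in> unit_ball_norm n N" and Phy: "\<Phi> y = M (a f)"
        proof (cases "c = 0")
          case True
          then have "D = 0" using assms(3) by (simp add: c_def)
          then have "f = f0" using nf by simp
          show ?thesis
            apply (rule that[of "\<lambda>i. 0"])
            using zero_ball[OF Nn] apply simp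
            using \<open>f = f0\<close> by (simp add: \<Phi>_def)
        next
          case False
          then have cp: "c > 0" using c0 by simp
          define y where "y = (\<lambda>i. (1/c) * vsub (a f) (a f0) i)"
          have vc: "vsub (a f) (a f0) \<in> coord_space n" using vsub_coord ac f f0 by blast
          then have yc: "y \<in> coord_space n" unfolding y_def coord_space_def by simp
          have "N y = \<bar>1/c\<bar> * N (vsub (a f) (a f0))"
            unfolding y_def using Nn vc unfolding is_norm_on_def by blast
          also have "\<dots> \<le> (1/c) * (\<gamma> * norm (f - f0))" using aL[rule_format, OF f f0] cp by (simp add: divide_right_mono)
          also have "\<dots> \<le> (1/c) * (\<gamma> * D)" using nf assms(3) cp by (simp add: divide_right_mono)
          also have "\<dots> = 1" using cp by (simp add: c_def[symmetric])
          finally have "N y \<le> 1" .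
          then have yb: "y \<in> unit_ball_norm n N" using yc unfolding unit_ball_norm_def by simp
          have "(\<lambda>i. a f0 i + c * y i) = a f"
            by (rule ext) (use cp in \<open>simp add: y_def vsub_def\<close>)
          then have "\<Phi> y = M (a f)" by (simp add: \<Phi>_def)
          then show ?thesis using that yb by blast
        qed
        have "x \<le> norm (f - \<Phi> y)" unfolding x by (rule inner_le[OF yb])
        also have "\<dots> = norm (f - M (a f))" using Phy by simp
        also have "\<dots> \<le> Sup {norm (f - M (a f)) | f. f \<in> K}"
          by (rule cSup_upper[OF _ bdd]) (use f in blast)
        finally show "x \<le> Sup {norm (f - M (a f)) | f. f \<in> K}" .
      qed
      show "lipschitz_width g' n K \<le> s" using step1 step2 step3 by linarith
    qed
    then show ?thesis unfolding stable_manifold_width_def g'_def D_def .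
  qed
qed

end
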